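(* For every real $r\ge0$, the sphere $\{Y\in\mathcal{M}: d_{GH}(\Delta_1,Y)=r\}$ in the Gromov–Hausdorff space $\mathcal{M}$ is path connected (as a subspace of the metric space $(\mathcal{M},d_{GH})$).
   Context: $\mathcal{M}$ denotes the set of isometry classes of compact metric spaces endowed with the Gromov–Hausdorff distance $d_{GH}$ (a metric on $\mathcal{M}$): $d_{GH}(X,Y)$ is the infimum of $r$ such that there exist a metric space $Z$ and subsets $X',Y'\subset Z$ isometric to $X,Y$ with Hausdorff distance $d_H(X',Y')\le r$. $\Delta_1$ is the single-point metric space. *)

theory Defs
  imports "HOL-Analysis.Analysis"
begin

text \<open>Carriers are taken inside the type real, which has cardinality of the
  continuum; every compact metric space has cardinality at most the
  continuum, so every compact metric space has such a representative.\<close>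

type_synonym cms = "real set \<times> (real \<Rightarrow> real \<Rightarrow> real)"

definition is_cms :: "cms \<Rightarrow> bool" where
  "is_cms X \<longleftrightarrow> fst X \<noteq> {} \<and> Metric_space (fst X) (snd X)
     \<and> compact_space (Metric_space.mtopology (fst X) (snd X))"

definition isom_emb :: "cms \<Rightarrow> real set \<Rightarrow> (real \<Rightarrow> real \<Rightarrow> real) \<Rightarrow> (real \<Rightarrow> real) \<Rightarrow> bool" where
  "isom_emb X Z dZ f \<longleftrightarrow> f ` fst X \<subseteq> Z \<and>
     (\<forall>x\<in>fst X. \<forall>y\<in>fst X. dZ (f x) (f y) = snd X x y)"

definition hausd :: "(real \<Rightarrow> real \<Rightarrow> real) \<Rightarrow> real set \<Rightarrow> real set \<Rightarrow> real" where
  "hausd d A B = max (SUP a\<in>A. INF b\<in>B. d a b) (SUP b\<in>B. INF a\<in>A. d a b)"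

text \<open>Gromov--Hausdorff distance.  The ambient space Z may be taken with
  carrier in real (it suffices to consider Z = union of the two images).\<close>
definition dGH :: "cms \<Rightarrow> cms \<Rightarrow> real" where
  "dGH X Y = Inf {r. \<exists>Z dZ f g. Metric_space Z dZ \<and> isom_emb X Z dZ f \<and> isom_emb Y Z dZ g
                   \<and> hausd dZ (f ` fst X) (g ` fst Y) \<le> r}"

definition Delta1 :: cms where
  "Delta1 = ({0}, \<lambda>_ _. 0)"

text \<open>Path connectedness of a subset A (closed under isometry) of the
  Gromov--Hausdorff space, expressed on representatives: continuity of a
  path into the quotient metric space (M, dGH) is continuity with respect
  to the pseudometric dGH on representatives.\<close>
definition gh_path_connected :: "cms set \<Rightarrow> bool" where
  "gh_path_connected A \<longleftrightarrow>
    (\<forall>Y0\<in>A. \<forall>Y1\<in>A. \<exists>\<gamma>::real \<Rightarrow> cms.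
       (\<forall>t\<in>{0..1}. \<gamma> t \<in> A) \<and> \<gamma> 0 = Y0 \<and> \<gamma> 1 = Y1 \<and>
       (\<forall>t\<in>{0..1}. \<forall>e>0. \<exists>\<delta>>0. \<forall>s\<in>{0..1}. \<bar>s - t\<bar> < \<delta> \<longrightarrow> dGH (\<gamma> s) (\<gamma> t) < e))"

end

theory Submission
  imports Defs
begin


definition enc :: "real \<times> real \<Rightarrow> real" where "enc = (SOME f. inj f)"

lemma inj_enc: "inj enc"
proof -
  obtain f :: "real\<times>real\<Rightarrow>real" where "bij_betw f ((UNIV::real set) \<times> (UNIV::real set)) (UNIV::real set)"
    using card_of_Times_same_infinite[of "UNIV::real set"] card_of_ordIso infinite_UNIV_char_0 by blast
  then have "inj f" by (auto simp: bij_betw_def)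
  then show ?thesis unfolding enc_def by (metis someI)
qed

definition dec :: "real \<Rightarrow> real \<times> real" where "dec = inv enc"

lemma dec_enc [simp]: "dec (enc p) = p"
  by (simp add: dec_def inj_enc)

lemma enc_eq_iff [simp]: "enc p = enc q \<longleftrightarrow> p = q"
  using inj_enc by (auto dest: injD)

lemma ms_transport:
  assumes "Metric_space S d"
  shows "Metric_space (enc ` S) (\<lambda>a b. d (dec a) (dec b))"
proof -
  interpret M: Metric_space S d by fact
  show ?thesis
  proof
    fix x y show "0 \<le> d (dec x) (dec y)" by simp
    show "d (dec x) (dec y) = d (dec y) (dec x)" by (rule M.commute)
  next
    fix x y assume "x \<in> enc ` S" "y \<in> enc ` S"
    then show "d (dec x) (dec y) = 0 \<longleftrightarrow> x = y" by auto
  next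
    fix x y z assume "x \<in> enc ` S" "y \<in> enc ` S" "z \<in> enc ` S"
    then show "d (dec x) (dec z) \<le> d (dec x) (dec y) + d (dec y) (dec z)"
      by (auto intro: M.triangle)
  qed
qed

lemma cms_ms: "is_cms X \<Longrightarrow> Metric_space (fst X) (snd X)"
  by (simp add: is_cms_def)

lemma cms_ne: "is_cms X \<Longrightarrow> fst X \<noteq> {}"
  by (simp add: is_cms_def)

lemma cms_bdd:
  assumes "is_cms X"
  shows "\<exists>B. \<forall>x\<in>fst X. \<forall>y\<in>fst X. snd X x y \<le> B"
proof -
  interpret M: Metric_space "fst X" "snd X" using assms by (simp add: is_cms_def)
  have "compactin M.mtopology (fst X)"
    using assms by (simp add: is_cms_def compact_space_def)
  then have "M.mbounded (fst X)" by (rule M.compactin_imp_mbounded)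
  then show ?thesis by (simp add: M.mbounded_alt)
qed

lemma Delta1_cms: "is_cms Delta1"
proof -
  have ms: "Metric_space {0::real} (\<lambda>_ _. 0)"
    by (simp add: Metric_space_def)
  have "compact_space (Metric_space.mtopology {0::real} (\<lambda>_ _. 0))"
    unfolding compact_space_def Metric_space.topspace_mtopology[OF ms]
    by (rule finite_imp_compactin) (auto simp: Metric_space.topspace_mtopology[OF ms])
  then show ?thesis using ms by (simp add: is_cms_def Delta1_def)
qed



lemma hausd_le:
  assumes "A \<noteq> {}" "B \<noteq> {}" "\<forall>a b. 0 \<le> d a b"
    "\<forall>a\<in>A. \<exists>b\<in>B. d a b \<le> e" "\<forall>b\<in>B. \<exists>a\<in>A. d a b \<le> e"
  shows "hausd d A B \<le> e"
proof -
  have 1: "(INF b\<in>B. d a b) \<le> e" if aA: "a \<in> A" for a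
  proof -
    obtain b where b: "b\<in>B" "d a b \<le> e" using assms(4) aA by blast
    have "(INF b\<in>B. d a b) \<le> d a b"
      by (rule cINF_lower[OF _ b(1)]) (rule bdd_belowI2[where m=0], use assms(3) in auto)
    then show ?thesis using b(2) by (rule order.trans)
  qed
  have 2: "(INF a\<in>A. d a b) \<le> e" if bB: "b \<in> B" for b
  proof -
    obtain a where a: "a\<in>A" "d a b \<le> e" using assms(5) bB by blast
    have "(INF a\<in>A. d a b) \<le> d a b"
      by (rule cINF_lower[OF _ a(1)]) (rule bdd_belowI2[where m=0], use assms(3) in auto)
    then show ?thesis using a(2) by (rule order.trans)
  qed
  have "(SUP a\<in>A. INF b\<in>B. d a b) \<le> e" using 1 assms(1) by (intro cSUP_least) auto
  moreover have "(SUP b\<in>B. INF a\<in>A. d a b) \<le> e" using 2 assms(2) by (intro cSUP_least) auto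
  ultimately show ?thesis unfolding hausd_def by (rule max.boundedI)
qed

lemma hausd_nonneg:
  assumes "A \<noteq> {}" "B \<noteq> {}" "\<forall>a b. 0 \<le> d a b" "\<forall>a\<in>A. \<forall>b\<in>B. d a b \<le> c"
  shows "0 \<le> hausd d A B"
proof -
  obtain a0 where a0: "a0 \<in> A" using assms(1) by blast
  obtain b0 where b0: "b0 \<in> B" using assms(2) by blast
  have "0 \<le> (INF b\<in>B. d a0 b)" using assms(2,3) by (intro cINF_greatest) auto
  also have "\<dots> \<le> (SUP a\<in>A. INF b\<in>B. d a b)"
  proof (rule cSUP_upper[OF a0])
    have "(INF b\<in>B. d a b) \<le> c" if "a \<in> A" for a
    proof -
      have "(INF b\<in>B. d a b) \<le> d a b0"
        by (rule cINF_lower[OF _ b0]) (rule bdd_belowI2[where m=0], use assms(3) in auto)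
      then show ?thesis using assms(4) that b0 by force
    qed
    then show "bdd_above ((\<lambda>a. INF b\<in>B. d a b) ` A)" by (intro bdd_aboveI2) 
  qed
  finally show ?thesis unfolding hausd_def by (rule max.coboundedI1)
qed

lemma emb_bdd:
  assumes "is_cms X" "is_cms Y" "Metric_space Z dZ" "isom_emb X Z dZ f" "isom_emb Y Z dZ g"
  shows "\<exists>c. \<forall>x\<in>fst X. \<forall>y\<in>fst Y. dZ (f x) (g y) \<le> c"
proof -
  interpret M: Metric_space Z dZ by fact
  obtain BX where BX: "\<forall>x\<in>fst X. \<forall>y\<in>fst X. snd X x y \<le> BX" using cms_bdd[OF assms(1)] by blast
  obtain BY where BY: "\<forall>x\<in>fst Y. \<forall>y\<in>fst Y. snd Y x y \<le> BY" using cms_bdd[OF assms(2)] by blast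
  obtain x0 where x0: "x0 \<in> fst X" using cms_ne[OF assms(1)] by blast
  obtain y0 where y0: "y0 \<in> fst Y" using cms_ne[OF assms(2)] by blast
  have fX: "f x \<in> Z" if "x \<in> fst X" for x using assms(4) that by (auto simp: isom_emb_def)
  have gY: "g y \<in> Z" if "y \<in> fst Y" for y using assms(5) that by (auto simp: isom_emb_def)
  have "dZ (f x) (g y) \<le> BX + dZ (f x0) (g y0) + BY" if "x \<in> fst X" "y \<in> fst Y" for x y
  proof -
    have "dZ (f x) (g y) \<le> dZ (f x) (f x0) + dZ (f x0) (g y)"
      using M.triangle fX gY that x0 by blast
    also have "dZ (f x0) (g y) \<le> dZ (f x0) (g y0) + dZ (g y0) (g y)"
      using M.triangle fX gY that x0 y0 by blast
    also have "dZ (f x) (f x0) = snd X x x0" using assms(4) that x0 by (auto simp: isom_emb_def)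
    also have "dZ (g y0) (g y) = snd Y y0 y" using assms(5) that y0 by (auto simp: isom_emb_def)
    finally show ?thesis using BX BY that x0 y0 by force
  qed
  then show ?thesis by blast
qed

lemma dGH_le:
  assumes "is_cms X" "is_cms Y" "Metric_space Z dZ" "isom_emb X Z dZ f" "isom_emb Y Z dZ g"
    "\<forall>x\<in>fst X. \<exists>y\<in>fst Y. dZ (f x) (g y) \<le> e" "\<forall>y\<in>fst Y. \<exists>x\<in>fst X. dZ (f x) (g y) \<le> e"
  shows "dGH X Y \<le> e"
  unfolding dGH_def
proof (rule cInf_lower)
  have "hausd dZ (f ` fst X) (g ` fst Y) \<le> e"
    using assms(6,7) cms_ne[OF assms(1)] cms_ne[OF assms(2)] Metric_space.nonneg[OF assms(3)]
    by (intro hausd_le) auto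
  then show "e \<in> {r. \<exists>Z dZ f g. Metric_space Z dZ \<and> isom_emb X Z dZ f \<and> isom_emb Y Z dZ g
                   \<and> hausd dZ (f ` fst X) (g ` fst Y) \<le> r}" using assms(3,4,5) by blast
  show "bdd_below {r. \<exists>Z dZ f g. Metric_space Z dZ \<and> isom_emb X Z dZ f \<and> isom_emb Y Z dZ g
                   \<and> hausd dZ (f ` fst X) (g ` fst Y) \<le> r}"
  proof (rule bdd_belowI)
    fix r assume "r \<in> {r. \<exists>Z dZ f g. Metric_space Z dZ \<and> isom_emb X Z dZ f \<and> isom_emb Y Z dZ g
                   \<and> hausd dZ (f ` fst X) (g ` fst Y) \<le> r}"
    then obtain Z' dZ' f' g' where h: "Metric_space Z' dZ'" "isom_emb X Z' dZ' f'" "isom_emb Y Z' dZ' g'"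
      "hausd dZ' (f' ` fst X) (g' ` fst Y) \<le> r" by blast
    obtain c where c: "\<forall>x\<in>fst X. \<forall>y\<in>fst Y. dZ' (f' x) (g' y) \<le> c"
      using emb_bdd[OF assms(1,2) h(1,2,3)] by blast
    have "0 \<le> hausd dZ' (f' ` fst X) (g' ` fst Y)"
      using c cms_ne[OF assms(1)] cms_ne[OF assms(2)] Metric_space.nonneg[OF h(1)]
      by (intro hausd_nonneg[where c=c]) auto
    then show "0 \<le> r" using h(4) by linarith
  qed
qed

lemma dGH_le2:
  assumes "is_cms X" "is_cms Y" "Metric_space Z dZ" "isom_emb X Z dZ f" "isom_emb Y Z dZ g"
    "\<forall>x\<in>fst X. \<exists>y\<in>fst Y. dZ (f x) (g y) \<le> e" "\<forall>y\<in>fst Y. \<exists>x\<in>fst X. dZ (f x) (g y) \<le> e"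
  shows "dGH X Y \<le> e \<and> dGH Y X \<le> e"
proof
  show "dGH X Y \<le> e" by (rule dGH_le[OF assms])
  have c: "\<And>a b. dZ a b = dZ b a" using Metric_space.commute[OF assms(3)] by blast
  show "dGH Y X \<le> e"
    by (rule dGH_le[OF assms(2,1,3,5,4)]) (use assms(6,7) c in auto)
qed

lemma dGH_self: assumes "is_cms X" shows "dGH X X \<le> 0"
proof -
  have z: "snd X x x \<le> 0" if "x \<in> fst X" for x using Metric_space.zero[OF cms_ms[OF assms] that that] by simp
  show ?thesis
  proof (rule dGH_le[where Z="fst X" and dZ="snd X" and f=id and g=id])
    show "\<forall>x\<in>fst X. \<exists>y\<in>fst X. snd X (id x) (id y) \<le> 0" using z by auto
    show "\<forall>y\<in>fst X. \<exists>x\<in>fst X. snd X (id x) (id y) \<le> 0" using z by auto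
  qed (use assms in \<open>auto simp: isom_emb_def cms_ms\<close>)
qed



definition diam :: "cms \<Rightarrow> real" where
  "diam X = (SUP p\<in>fst X \<times> fst X. snd X (fst p) (snd p))"

lemma diam_ge:
  assumes "is_cms X" "x \<in> fst X" "y \<in> fst X"
  shows "snd X x y \<le> diam X"
proof -
  obtain B where B: "\<forall>x\<in>fst X. \<forall>y\<in>fst X. snd X x y \<le> B" using cms_bdd[OF assms(1)] by blast
  have "bdd_above ((\<lambda>p. snd X (fst p) (snd p)) ` (fst X \<times> fst X))"
    by (rule bdd_aboveI2[where M=B]) (use B in auto)
  from cSUP_upper[OF _ this, of "(x,y)"] assms show ?thesis unfolding diam_def by auto
qed

lemma diam_le:
  assumes "is_cms X" "\<And>x y. x \<in> fst X \<Longrightarrow> y \<in> fst X \<Longrightarrow> snd X x y \<le> c"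
  shows "diam X \<le> c"
  unfolding diam_def
  by (rule cSUP_least) (use cms_ne[OF assms(1)] assms(2) in auto)

lemma diam_nonneg:
  assumes "is_cms X" shows "0 \<le> diam X"
proof -
  obtain x where x: "x \<in> fst X" using cms_ne[OF assms] by blast
  have "0 \<le> snd X x x" using Metric_space.nonneg[OF cms_ms[OF assms]] by blast
  also have "\<dots> \<le> diam X" by (rule diam_ge[OF assms x x])
  finally show ?thesis .
qed

lemma cms_zero: "is_cms X \<Longrightarrow> x \<in> fst X \<Longrightarrow> snd X x x = 0"
  using Metric_space.zero[OF cms_ms] by blast

lemma cms_nonneg: "is_cms X \<Longrightarrow> 0 \<le> snd X x y"
  using Metric_space.nonneg[OF cms_ms] by blast

lemma cms_commute: "is_cms X \<Longrightarrow> snd X x y = snd X y x"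
  using Metric_space.commute[OF cms_ms] by blast

lemma cms_triangle: "is_cms X \<Longrightarrow> x \<in> fst X \<Longrightarrow> y \<in> fst X \<Longrightarrow> z \<in> fst X \<Longrightarrow> snd X x z \<le> snd X x y + snd X y z"
  using Metric_space.triangle[OF cms_ms] by blast

lemma cms_pos: "is_cms X \<Longrightarrow> x \<in> fst X \<Longrightarrow> y \<in> fst X \<Longrightarrow> x \<noteq> y \<Longrightarrow> 0 < snd X x y"
  using Metric_space.zero[OF cms_ms] cms_nonneg by (metis order_less_le)

lemma Delta1_ge:
  assumes Y: "is_cms Y" and Z: "Metric_space Z dZ" and f: "isom_emb Delta1 Z dZ f" and g: "isom_emb Y Z dZ g"
  shows "diam Y / 2 \<le> hausd dZ (f ` fst Delta1) (g ` fst Y)"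
proof -
  interpret M: Metric_space Z dZ by fact
  define p where "p = f 0"
  have pZ: "p \<in> Z" using f by (auto simp: isom_emb_def Delta1_def p_def)
  have gY: "g y \<in> Z" if "y \<in> fst Y" for y using g that by (auto simp: isom_emb_def)
  have gd: "dZ (g x) (g y) = snd Y x y" if "x \<in> fst Y" "y \<in> fst Y" for x y
    using g that by (auto simp: isom_emb_def)
  obtain y0 where y0: "y0 \<in> fst Y" using cms_ne[OF Y] by blast
  obtain BY where BY: "\<forall>x\<in>fst Y. \<forall>y\<in>fst Y. snd Y x y \<le> BY" using cms_bdd[OF Y] by blast
  have bdd: "bdd_above ((\<lambda>y. dZ p (g y)) ` fst Y)"
  proof (rule bdd_aboveI2[where M="dZ p (g y0) + BY"])
    fix y assume y: "y \<in> fst Y"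
    have "dZ p (g y) \<le> dZ p (g y0) + dZ (g y0) (g y)" using M.triangle pZ gY y y0 by blast
    then show "dZ p (g y) \<le> dZ p (g y0) + BY" using gd[OF y0 y] BY y y0 by force
  qed
  define S where "S = (SUP y\<in>fst Y. dZ p (g y))"
  have le: "dZ p (g y) \<le> S" if "y \<in> fst Y" for y unfolding S_def by (rule cSUP_upper[OF that bdd])
  have "diam Y \<le> 2 * S"
  proof (rule diam_le[OF Y])
    fix x y assume xy: "x \<in> fst Y" "y \<in> fst Y"
    have "snd Y x y = dZ (g x) (g y)" using gd xy by simp
    also have "\<dots> \<le> dZ (g x) p + dZ p (g y)" using M.triangle pZ gY xy by blast
    also have "\<dots> = dZ p (g x) + dZ p (g y)" using M.commute by simp
    also have "\<dots> \<le> 2 * S" using le[OF xy(1)] le[OF xy(2)] by linarith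
    finally show "snd Y x y \<le> 2 * S" .
  qed
  moreover have "S = (SUP b\<in>g ` fst Y. INF a\<in>f ` fst Delta1. dZ a b)"
    unfolding S_def p_def by (simp add: Delta1_def image_image)
  ultimately show ?thesis unfolding hausd_def by linarith
qed

lemma Delta1_wit:
  assumes Y: "is_cms Y"
  shows "\<exists>Z dZ f g. Metric_space Z dZ \<and> isom_emb Delta1 Z dZ f \<and> isom_emb Y Z dZ g \<and>
     (\<forall>x\<in>fst Delta1. \<exists>y\<in>fst Y. dZ (f x) (g y) \<le> diam Y / 2) \<and>
     (\<forall>y\<in>fst Y. \<exists>x\<in>fst Delta1. dZ (f x) (g y) \<le> diam Y / 2)"
proof (cases "diam Y = 0")
  case True
  obtain y0 where y0: "y0 \<in> fst Y" using cms_ne[OF Y] by blast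
  have le: "snd Y y0 y \<le> 0" if "y \<in> fst Y" for y using diam_ge[OF Y y0 that] True by simp
  show ?thesis
  proof (intro exI conjI)
    show "Metric_space (fst Y) (snd Y)" by (rule cms_ms[OF Y])
    show "isom_emb Delta1 (fst Y) (snd Y) (\<lambda>_. y0)"
      using y0 cms_zero[OF Y y0] by (auto simp: isom_emb_def Delta1_def)
    show "isom_emb Y (fst Y) (snd Y) id" by (auto simp: isom_emb_def)
    show "\<forall>x\<in>fst Delta1. \<exists>y\<in>fst Y. snd Y y0 (id y) \<le> diam Y / 2"
      using y0 le True by force
    show "\<forall>y\<in>fst Y. \<exists>x\<in>fst Delta1. snd Y y0 (id y) \<le> diam Y / 2"
      using le True by (auto simp: Delta1_def)
  qed
next
  case False
  define D where "D = diam Y"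
  have Dpos: "0 < D" using False diam_nonneg[OF Y] unfolding D_def by linarith
  define S where "S = insert (1::real,0::real) ((\<lambda>y. (0,y)) ` fst Y)"
  define d where "d = (\<lambda>p q::real\<times>real. if p = q then 0 else if fst p = 1 \<or> fst q = 1 then D/2
       else snd Y (snd p) (snd q))"
  have dY: "snd Y x y \<le> D" if "x \<in> fst Y" "y \<in> fst Y" for x y
    using diam_ge[OF Y that] D_def by simp
  have ms: "Metric_space S d"
  proof
    fix x y show "0 \<le> d x y" unfolding d_def using Dpos cms_nonneg[OF Y] by auto
    show "d x y = d y x" unfolding d_def using cms_commute[OF Y] by auto
  next
    fix x y assume "x \<in> S" "y \<in> S"
    then show "d x y = 0 \<longleftrightarrow> x = y" unfolding d_def S_def using Dpos cms_pos[OF Y]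
      by (auto, fastforce+)
  next
    fix x y z assume xyz: "x \<in> S" "y \<in> S" "z \<in> S"
    show "d x z \<le> d x y + d y z"
    proof (cases "x = z \<or> x = y \<or> y = z")
      case True
      then show ?thesis unfolding d_def using Dpos cms_nonneg[OF Y] by auto
    next
      case ne: False
      show ?thesis
      proof (cases "fst x = 1 \<or> fst y = 1 \<or> fst z = 1")
        case True
        have "fst x = 1 \<or> fst z = 1 \<Longrightarrow> ?thesis" unfolding d_def using ne Dpos cms_nonneg[OF Y] by auto
        moreover have "fst y = 1 \<Longrightarrow> \<not> (fst x = 1 \<or> fst z = 1) \<Longrightarrow> ?thesis"
          unfolding d_def using ne xyz dY unfolding S_def by auto
        ultimately show ?thesis using True by blast
      next
        case False
        then obtain a b c where "x = (0,a)" "y = (0,b)" "z = (0,c)" "a \<in> fst Y" "b \<in> fst Y" "c \<in> fst Y"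
          using xyz unfolding S_def by auto
        then show ?thesis unfolding d_def using ne cms_triangle[OF Y] by auto
      qed
    qed
  qed
  show ?thesis
  proof (intro exI conjI)
    show "Metric_space (enc ` S) (\<lambda>a b. d (dec a) (dec b))" by (rule ms_transport[OF ms])
    show "isom_emb Delta1 (enc ` S) (\<lambda>a b. d (dec a) (dec b)) (\<lambda>_. enc (1,0))"
      by (auto simp: isom_emb_def Delta1_def S_def d_def)
    show "isom_emb Y (enc ` S) (\<lambda>a b. d (dec a) (dec b)) (\<lambda>y. enc (0,y))"
      using cms_zero[OF Y] by (auto simp: isom_emb_def S_def d_def)
    obtain y0 where y0: "y0 \<in> fst Y" using cms_ne[OF Y] by blast
    show "\<forall>x\<in>fst Delta1. \<exists>y\<in>fst Y. d (dec (enc (1,0))) (dec (enc (0,y))) \<le> diam Y / 2"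
      using y0 by (auto simp: d_def D_def)
    show "\<forall>y\<in>fst Y. \<exists>x\<in>fst Delta1. d (dec (enc (1,0))) (dec (enc (0,y))) \<le> diam Y / 2"
      by (auto simp: d_def D_def Delta1_def)
  qed
qed

lemma dGH_Delta1:
  assumes Y: "is_cms Y"
  shows "dGH Delta1 Y = diam Y / 2"
proof -
  obtain Z dZ f g where w: "Metric_space Z dZ" "isom_emb Delta1 Z dZ f" "isom_emb Y Z dZ g"
     "\<forall>x\<in>fst Delta1. \<exists>y\<in>fst Y. dZ (f x) (g y) \<le> diam Y / 2"
     "\<forall>y\<in>fst Y. \<exists>x\<in>fst Delta1. dZ (f x) (g y) \<le> diam Y / 2"
    using Delta1_wit[OF Y] by blast
  have le: "dGH Delta1 Y \<le> diam Y / 2" by (rule dGH_le[OF Delta1_cms Y w])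
  have "diam Y / 2 \<le> dGH Delta1 Y"
    unfolding dGH_def
  proof (rule cInf_greatest)
    show "{r. \<exists>Z dZ f g. Metric_space Z dZ \<and> isom_emb Delta1 Z dZ f \<and> isom_emb Y Z dZ g
                   \<and> hausd dZ (f ` fst Delta1) (g ` fst Y) \<le> r} \<noteq> {}"
      using w(1,2,3) by blast
    fix r assume "r \<in> {r. \<exists>Z dZ f g. Metric_space Z dZ \<and> isom_emb Delta1 Z dZ f \<and> isom_emb Y Z dZ g
                   \<and> hausd dZ (f ` fst Delta1) (g ` fst Y) \<le> r}"
    then obtain Z' dZ' f' g' where h: "Metric_space Z' dZ'" "isom_emb Delta1 Z' dZ' f'" "isom_emb Y Z' dZ' g'"
      "hausd dZ' (f' ` fst Delta1) (g' ` fst Y) \<le> r" by blast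
    show "diam Y / 2 \<le> r" using Delta1_ge[OF Y h(1,2,3)] h(4) by linarith
  qed
  with le show ?thesis by linarith
qed



definition pd :: "cms \<Rightarrow> cms \<Rightarrow> real \<Rightarrow> real \<Rightarrow> real\<times>real \<Rightarrow> real\<times>real \<Rightarrow> real" where
 "pd X Y a b p q = max (a * snd X (fst p) (fst q)) (b * snd Y (snd p) (snd q))"

definition PP :: "cms \<Rightarrow> cms \<Rightarrow> real \<Rightarrow> real \<Rightarrow> cms" where
 "PP X Y a b = (enc ` (fst X \<times> fst Y), \<lambda>u v. pd X Y a b (dec u) (dec v))"

lemma max_eq0: "0 \<le> (x::real) \<Longrightarrow> 0 \<le> y \<Longrightarrow> max x y = 0 \<longleftrightarrow> x = 0 \<and> y = 0"
  by (auto simp: max_def)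

lemma pd_ms:
  assumes X: "is_cms X" and Y: "is_cms Y" and a: "0 < a" and b: "0 < b"
  shows "Metric_space (fst X \<times> fst Y) (pd X Y a b)"
proof
  fix p q show "0 \<le> pd X Y a b p q" unfolding pd_def using cms_nonneg[OF X] a by (simp add: max.coboundedI1)
  show "pd X Y a b p q = pd X Y a b q p" unfolding pd_def
    using cms_commute[OF X, of "fst p" "fst q"] cms_commute[OF Y, of "snd p" "snd q"] by simp
next
  fix p q assume pq: "p \<in> fst X \<times> fst Y" "q \<in> fst X \<times> fst Y"
  have "pd X Y a b p q = 0 \<longleftrightarrow> snd X (fst p) (fst q) = 0 \<and> snd Y (snd p) (snd q) = 0"
    unfolding pd_def using max_eq0[OF mult_nonneg_nonneg[OF _ cms_nonneg[OF X, of "fst p" "fst q"]]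
       mult_nonneg_nonneg[OF _ cms_nonneg[OF Y, of "snd p" "snd q"]]] a b by simp
  also have "\<dots> \<longleftrightarrow> p = q" using Metric_space.zero[OF cms_ms[OF X]] Metric_space.zero[OF cms_ms[OF Y]] pq
    by (auto simp: prod_eq_iff)
  finally show "pd X Y a b p q = 0 \<longleftrightarrow> p = q" .
next
  fix p q s assume pqs: "p \<in> fst X \<times> fst Y" "q \<in> fst X \<times> fst Y" "s \<in> fst X \<times> fst Y"
  have 1: "a * snd X (fst p) (fst s) \<le> a * snd X (fst p) (fst q) + a * snd X (fst q) (fst s)"
    using cms_triangle[OF X, of "fst p" "fst q" "fst s"] pqs a by (auto simp: distrib_left[symmetric])
  have 2: "b * snd Y (snd p) (snd s) \<le> b * snd Y (snd p) (snd q) + b * snd Y (snd q) (snd s)"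
    using cms_triangle[OF Y, of "snd p" "snd q" "snd s"] pqs b by (auto simp: distrib_left[symmetric])
  show "pd X Y a b p s \<le> pd X Y a b p q + pd X Y a b q s"
    unfolding pd_def using 1 2 by linarith
qed

lemma PP_ms:
  assumes "is_cms X" "is_cms Y" "0 < a" "0 < b"
  shows "Metric_space (fst (PP X Y a b)) (snd (PP X Y a b))"
  unfolding PP_def using ms_transport[OF pd_ms[OF assms]] by simp

lemma PP_cms:
  assumes X: "is_cms X" and Y: "is_cms Y" and a: "0 < a" and b: "0 < b"
  shows "is_cms (PP X Y a b)"
proof -
  let ?M = "enc ` (fst X \<times> fst Y)"
  let ?d = "\<lambda>u v. pd X Y a b (dec u) (dec v)"
  have ms: "Metric_space ?M ?d" using ms_transport[OF pd_ms[OF assms]] .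
  have msX: "Metric_space (fst X) (snd X)" using cms_ms[OF X] .
  have msY: "Metric_space (fst Y) (snd Y)" using cms_ms[OF Y] .
  have cX: "compact_space (Metric_space.mtopology (fst X) (snd X))" using X by (simp add: is_cms_def)
  have cY: "compact_space (Metric_space.mtopology (fst Y) (snd Y))" using Y by (simp add: is_cms_def)
  have "compact_space (Metric_space.mtopology ?M ?d)"
    unfolding Metric_space.compact_space_sequentially[OF ms]
  proof (intro allI impI)
    fix \<sigma> :: "nat \<Rightarrow> real" assume rs: "range \<sigma> \<subseteq> ?M"
    define p where "p = (\<lambda>n. dec (\<sigma> n))"
    have pin: "p n \<in> fst X \<times> fst Y" for n
    proof -
      have "\<sigma> n \<in> ?M" using rs by blast
      then show ?thesis unfolding p_def by auto
    qed
    have s_eq: "\<sigma> n = enc (p n)" for n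
    proof -
      have "\<sigma> n \<in> ?M" using rs by blast
      then show ?thesis unfolding p_def by auto
    qed
    have pin1: "fst (p n) \<in> fst X" "snd (p n) \<in> fst Y" for n using pin[of n] by (auto simp: mem_Times_iff)
    have "range (fst \<circ> p) \<subseteq> fst X" using pin1 by auto
    then obtain l1 r1 where l1: "l1 \<in> fst X" "strict_mono r1"
        "limitin (Metric_space.mtopology (fst X) (snd X)) ((fst \<circ> p) \<circ> r1) l1 sequentially"
      using cX unfolding Metric_space.compact_space_sequentially[OF msX] by meson
    have "range (snd \<circ> p \<circ> r1) \<subseteq> fst Y" using pin1 by auto
    then obtain l2 r2 where l2: "l2 \<in> fst Y" "strict_mono r2"
        "limitin (Metric_space.mtopology (fst Y) (snd Y)) ((snd \<circ> p \<circ> r1) \<circ> r2) l2 sequentially"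
      using cY unfolding Metric_space.compact_space_sequentially[OF msY] by meson
    have l1': "limitin (Metric_space.mtopology (fst X) (snd X)) ((fst \<circ> p \<circ> r1) \<circ> r2) l1 sequentially"
      using limitin_subsequence[OF l2(2) l1(3)] by simp
    show "\<exists>l r. l \<in> ?M \<and> strict_mono r \<and> limitin (Metric_space.mtopology ?M ?d) (\<sigma> \<circ> r) l sequentially"
    proof (intro exI conjI)
      show "enc (l1, l2) \<in> ?M" using l1 l2 by auto
      show "strict_mono (r1 \<circ> r2)" using l1(2) l2(2) by (rule strict_mono_o)
      show "limitin (Metric_space.mtopology ?M ?d) (\<sigma> \<circ> (r1 \<circ> r2)) (enc (l1, l2)) sequentially"
        unfolding Metric_space.limitin_metric[OF ms]
      proof (intro conjI allI impI)
        show "enc (l1, l2) \<in> ?M" using l1 l2 by auto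
        fix e :: real assume e: "0 < e"
        have ev1: "\<forall>\<^sub>F n in sequentially. snd X (fst (p (r1 (r2 n)))) l1 < e / a"
        proof -
          have "0 < e / a" using e a by simp
          with l1' have "\<forall>\<^sub>F n in sequentially. fst (p (r1 (r2 n))) \<in> fst X \<and> snd X (fst (p (r1 (r2 n)))) l1 < e / a"
            unfolding Metric_space.limitin_metric[OF msX] by auto
          then show ?thesis by (rule eventually_mono) auto
        qed
        have ev2: "\<forall>\<^sub>F n in sequentially. snd Y (snd (p (r1 (r2 n)))) l2 < e / b"
        proof -
          have "0 < e / b" using e b by simp
          with l2(3) have "\<forall>\<^sub>F n in sequentially. snd (p (r1 (r2 n))) \<in> fst Y \<and> snd Y (snd (p (r1 (r2 n)))) l2 < e / b"
            unfolding Metric_space.limitin_metric[OF msY] by auto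
          then show ?thesis by (rule eventually_mono) auto
        qed
        show "\<forall>\<^sub>F n in sequentially. (\<sigma> \<circ> (r1 \<circ> r2)) n \<in> ?M \<and> ?d ((\<sigma> \<circ> (r1 \<circ> r2)) n) (enc (l1, l2)) < e"
          using ev1 ev2
        proof (rule eventually_elim2)
          fix n assume h1: "snd X (fst (p (r1 (r2 n)))) l1 < e / a" and h2: "snd Y (snd (p (r1 (r2 n)))) l2 < e / b"
          have "a * snd X (fst (p (r1 (r2 n)))) l1 < e" using h1 a by (simp add: field_simps)
          moreover have "b * snd Y (snd (p (r1 (r2 n)))) l2 < e" using h2 b by (simp add: field_simps)
          ultimately show "(\<sigma> \<circ> (r1 \<circ> r2)) n \<in> ?M \<and> ?d ((\<sigma> \<circ> (r1 \<circ> r2)) n) (enc (l1, l2)) < e"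
            using rs by (auto simp: s_eq pd_def)
        qed
      qed
    qed
  qed
  moreover have "?M \<noteq> {}" using cms_ne[OF X] cms_ne[OF Y] by auto
  ultimately show ?thesis using ms unfolding is_cms_def PP_def by simp
qed

lemma diam_PP:
  assumes X: "is_cms X" and Y: "is_cms Y" and a: "0 < a" and b: "0 < b"
  shows "diam (PP X Y a b) = max (a * diam X) (b * diam Y)"
proof (rule antisym)
  have P: "is_cms (PP X Y a b)" by (rule PP_cms[OF assms])
  show "diam (PP X Y a b) \<le> max (a * diam X) (b * diam Y)"
  proof (rule diam_le[OF P])
    fix u v assume "u \<in> fst (PP X Y a b)" "v \<in> fst (PP X Y a b)"
    then obtain x y x' y' where uv: "u = enc (x,y)" "v = enc (x',y')" "x \<in> fst X" "y \<in> fst Y" "x' \<in> fst X" "y' \<in> fst Y"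
      unfolding PP_def by auto
    have "a * snd X x x' \<le> a * diam X" using diam_ge[OF X uv(3,5)] a by simp
    moreover have "b * snd Y y y' \<le> b * diam Y" using diam_ge[OF Y uv(4,6)] b by simp
    ultimately show "snd (PP X Y a b) u v \<le> max (a * diam X) (b * diam Y)"
      unfolding PP_def pd_def uv by auto
  qed
  obtain x0 where x0: "x0 \<in> fst X" using cms_ne[OF X] by blast
  obtain y0 where y0: "y0 \<in> fst Y" using cms_ne[OF Y] by blast
  have "diam X \<le> diam (PP X Y a b) / a"
  proof (rule diam_le[OF X])
    fix x x' assume xx: "x \<in> fst X" "x' \<in> fst X"
    have "snd (PP X Y a b) (enc (x,y0)) (enc (x',y0)) \<le> diam (PP X Y a b)"
      by (rule diam_ge[OF P]) (use xx y0 in \<open>auto simp: PP_def\<close>)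
    moreover have "snd (PP X Y a b) (enc (x,y0)) (enc (x',y0)) = a * snd X x x'"
      unfolding PP_def pd_def using cms_zero[OF Y y0] cms_nonneg[OF X, of x x'] a by simp
    ultimately show "snd X x x' \<le> diam (PP X Y a b) / a" using a by (simp add: field_simps)
  qed
  then have 1: "a * diam X \<le> diam (PP X Y a b)" using a by (simp add: field_simps)
  have "diam Y \<le> diam (PP X Y a b) / b"
  proof (rule diam_le[OF Y])
    fix y y' assume yy: "y \<in> fst Y" "y' \<in> fst Y"
    have "snd (PP X Y a b) (enc (x0,y)) (enc (x0,y')) \<le> diam (PP X Y a b)"
      by (rule diam_ge[OF P]) (use yy x0 in \<open>auto simp: PP_def\<close>)
    moreover have "snd (PP X Y a b) (enc (x0,y)) (enc (x0,y')) = b * snd Y y y'"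
      unfolding PP_def pd_def using cms_zero[OF X x0] cms_nonneg[OF Y, of y y'] b by simp
    ultimately show "snd Y y y' \<le> diam (PP X Y a b) / b" using b by (simp add: field_simps)
  qed
  then have 2: "b * diam Y \<le> diam (PP X Y a b)" using b by (simp add: field_simps)
  show "max (a * diam X) (b * diam Y) \<le> diam (PP X Y a b)" using 1 2 by simp
qed

lemma PP_end1:
  assumes X: "is_cms X" and Y: "is_cms Y" and b: "0 < b"
  shows "dGH X (PP X Y 1 b) \<le> b * diam Y \<and> dGH (PP X Y 1 b) X \<le> b * diam Y"
proof -
  have P: "is_cms (PP X Y 1 b)" by (rule PP_cms[OF X Y _ b]) simp
  obtain y0 where y0: "y0 \<in> fst Y" using cms_ne[OF Y] by blast
  have e: "snd (PP X Y 1 b) (enc (x,y0)) (enc (x',y')) = max (snd X x x') (b * snd Y y0 y')" for x x' y'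
    unfolding PP_def pd_def by simp
  have "dGH X (PP X Y 1 b) \<le> b * diam Y \<and> dGH (PP X Y 1 b) X \<le> b * diam Y"
  proof (rule dGH_le2[OF X P PP_ms[OF X Y _ b], where f="\<lambda>x. enc (x,y0)" and g=id])
    show "isom_emb X (fst (PP X Y 1 b)) (snd (PP X Y 1 b)) (\<lambda>x. enc (x, y0))"
      unfolding isom_emb_def using y0 e cms_zero[OF Y y0] cms_nonneg[OF X] by (auto simp: PP_def)
    show "isom_emb (PP X Y 1 b) (fst (PP X Y 1 b)) (snd (PP X Y 1 b)) id"
      unfolding isom_emb_def by auto
    show "\<forall>x\<in>fst X. \<exists>y\<in>fst (PP X Y 1 b). snd (PP X Y 1 b) (enc (x, y0)) (id y) \<le> b * diam Y"
    proof
      fix x assume x: "x \<in> fst X"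
      have "snd (PP X Y 1 b) (enc (x, y0)) (enc (x,y0)) = 0" using e cms_zero[OF X x] cms_zero[OF Y y0] by simp
      moreover have "0 \<le> b * diam Y" using diam_nonneg[OF Y] b by simp
      moreover have "enc (x,y0) \<in> fst (PP X Y 1 b)" using x y0 by (auto simp: PP_def)
      ultimately show "\<exists>y\<in>fst (PP X Y 1 b). snd (PP X Y 1 b) (enc (x, y0)) (id y) \<le> b * diam Y"
        by (metis id_apply order_refl)
    qed
    show "\<forall>y\<in>fst (PP X Y 1 b). \<exists>x\<in>fst X. snd (PP X Y 1 b) (enc (x, y0)) (id y) \<le> b * diam Y"
    proof
      fix u assume "u \<in> fst (PP X Y 1 b)"
      then obtain x y where u: "u = enc (x,y)" "x \<in> fst X" "y \<in> fst Y" unfolding PP_def by auto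
      have "snd (PP X Y 1 b) (enc (x, y0)) u = b * snd Y y0 y"
        using e u cms_zero[OF X u(2)] cms_nonneg[OF Y] b by simp
      also have "\<dots> \<le> b * diam Y" using diam_ge[OF Y y0 u(3)] b by simp
      finally show "\<exists>x\<in>fst X. snd (PP X Y 1 b) (enc (x, y0)) (id u) \<le> b * diam Y" using u by auto
    qed
  qed simp
  then show ?thesis .
qed

lemma PP_end2:
  assumes X: "is_cms X" and Y: "is_cms Y" and a: "0 < a"
  shows "dGH Y (PP X Y a 1) \<le> a * diam X \<and> dGH (PP X Y a 1) Y \<le> a * diam X"
proof -
  have P: "is_cms (PP X Y a 1)" by (rule PP_cms[OF X Y a]) simp
  obtain x0 where x0: "x0 \<in> fst X" using cms_ne[OF X] by blast
  have e: "snd (PP X Y a 1) (enc (x0,y)) (enc (x',y')) = max (a * snd X x0 x') (snd Y y y')" for y x' y'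
    unfolding PP_def pd_def by simp
  have "dGH Y (PP X Y a 1) \<le> a * diam X \<and> dGH (PP X Y a 1) Y \<le> a * diam X"
  proof (rule dGH_le2[OF Y P PP_ms[OF X Y a], where f="\<lambda>y. enc (x0,y)" and g=id])
    show "isom_emb Y (fst (PP X Y a 1)) (snd (PP X Y a 1)) (\<lambda>y. enc (x0, y))"
      unfolding isom_emb_def using x0 e cms_zero[OF X x0] cms_nonneg[OF Y] by (auto simp: PP_def)
    show "isom_emb (PP X Y a 1) (fst (PP X Y a 1)) (snd (PP X Y a 1)) id"
      unfolding isom_emb_def by auto
    show "\<forall>y\<in>fst Y. \<exists>u\<in>fst (PP X Y a 1). snd (PP X Y a 1) (enc (x0, y)) (id u) \<le> a * diam X"
    proof
      fix y assume y: "y \<in> fst Y"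
      have "snd (PP X Y a 1) (enc (x0, y)) (enc (x0,y)) = 0" using e cms_zero[OF X x0] cms_zero[OF Y y] by simp
      moreover have "0 \<le> a * diam X" using diam_nonneg[OF X] a by simp
      moreover have "enc (x0,y) \<in> fst (PP X Y a 1)" using x0 y by (auto simp: PP_def)
      ultimately show "\<exists>u\<in>fst (PP X Y a 1). snd (PP X Y a 1) (enc (x0, y)) (id u) \<le> a * diam X"
        by (metis id_apply order_refl)
    qed
    show "\<forall>u\<in>fst (PP X Y a 1). \<exists>y\<in>fst Y. snd (PP X Y a 1) (enc (x0, y)) (id u) \<le> a * diam X"
    proof
      fix u assume "u \<in> fst (PP X Y a 1)"
      then obtain x y where u: "u = enc (x,y)" "x \<in> fst X" "y \<in> fst Y" unfolding PP_def by auto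
      have "snd (PP X Y a 1) (enc (x0, y)) u = a * snd X x0 x"
        using e u cms_zero[OF Y u(3)] cms_nonneg[OF X] a by simp
      also have "\<dots> \<le> a * diam X" using diam_ge[OF X x0 u(2)] a by simp
      finally show "\<exists>y\<in>fst Y. snd (PP X Y a 1) (enc (x0, y)) (id u) \<le> a * diam X" using u by auto
    qed
  qed simp
  then show ?thesis .
qed



lemma glue:
  assumes P: "is_cms P" and Q: "is_cms Q" and C: "fst Q = fst P"
    and le1: "\<forall>x\<in>fst P. \<forall>y\<in>fst P. snd P x y \<le> snd Q x y"
    and le2: "\<forall>x\<in>fst P. \<forall>y\<in>fst P. snd Q x y \<le> snd P x y + \<epsilon>" and eps: "0 < \<epsilon>"
  shows "dGH P Q \<le> \<epsilon> \<and> dGH Q P \<le> \<epsilon>"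
proof -
  define C where "C = fst P"
  define e1 where "e1 = snd P"
  define e2 where "e2 = snd Q"
  define S where "S = (\<lambda>x. (0::real,x)) ` C \<union> (\<lambda>x. (1::real,x)) ` C"
  define g where "g = (\<lambda>(u::real\<times>real) (v::real\<times>real). if fst u = 0 \<and> fst v = 0 then e1 (snd u) (snd v)
      else if fst u \<noteq> 0 \<and> fst v \<noteq> 0 then e2 (snd u) (snd v) else e1 (snd u) (snd v) + \<epsilon>)"
  have n1: "0 \<le> e1 x y" for x y unfolding e1_def by (rule cms_nonneg[OF P])
  have n2: "0 \<le> e2 x y" for x y unfolding e2_def by (rule cms_nonneg[OF Q])
  have c1: "e1 x y = e1 y x" for x y unfolding e1_def by (rule cms_commute[OF P])
  have c2: "e2 x y = e2 y x" for x y unfolding e2_def by (rule cms_commute[OF Q])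
  have z1: "x \<in> C \<Longrightarrow> y \<in> C \<Longrightarrow> e1 x y = 0 \<longleftrightarrow> x = y" for x y
    unfolding e1_def C_def using Metric_space.zero[OF cms_ms[OF P]] by blast
  have z2: "x \<in> C \<Longrightarrow> y \<in> C \<Longrightarrow> e2 x y = 0 \<longleftrightarrow> x = y" for x y
    unfolding e2_def C_def using Metric_space.zero[OF cms_ms[OF Q]] C by auto
  have t1: "x \<in> C \<Longrightarrow> y \<in> C \<Longrightarrow> z \<in> C \<Longrightarrow> e1 x z \<le> e1 x y + e1 y z" for x y z
    unfolding e1_def C_def by (rule cms_triangle[OF P])
  have t2: "x \<in> C \<Longrightarrow> y \<in> C \<Longrightarrow> z \<in> C \<Longrightarrow> e2 x z \<le> e2 x y + e2 y z" for x y z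
    unfolding e2_def C_def using cms_triangle[OF Q] C by auto
  have l1: "x \<in> C \<Longrightarrow> y \<in> C \<Longrightarrow> e1 x y \<le> e2 x y" for x y using le1 unfolding e1_def e2_def C_def by blast
  have l2: "x \<in> C \<Longrightarrow> y \<in> C \<Longrightarrow> e2 x y \<le> e1 x y + \<epsilon>" for x y using le2 unfolding e1_def e2_def C_def by blast
  have ms: "Metric_space S g"
  proof
    fix u v show "0 \<le> g u v" unfolding g_def using n1 n2 eps by (auto intro: add_nonneg_nonneg)
    show "g u v = g v u" unfolding g_def using c1 c2 by auto
  next
    fix u v assume uv: "u \<in> S" "v \<in> S"
    show "g u v = 0 \<longleftrightarrow> u = v"
    proof (cases "fst u = fst v")
      case True
      then show ?thesis using uv z1 z2 unfolding g_def S_def by (auto simp: prod_eq_iff)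
    next
      case False
      have "0 < e1 (snd u) (snd v) + \<epsilon>" using n1[of "snd u" "snd v"] eps by linarith
      moreover have "fst u = 0 \<or> fst u = 1" "fst v = 0 \<or> fst v = 1" using uv unfolding S_def by auto
      ultimately show ?thesis using False unfolding g_def by auto
    qed
  next
    fix u v w assume uvw: "u \<in> S" "v \<in> S" "w \<in> S"
    obtain i x where u: "u = (i,x)" "x \<in> C" "i = 0 \<or> i = 1" using uvw(1) unfolding S_def by auto
    obtain j y where v: "v = (j,y)" "y \<in> C" "j = 0 \<or> j = 1" using uvw(2) unfolding S_def by auto
    obtain k z where w: "w = (k,z)" "z \<in> C" "k = 0 \<or> k = 1" using uvw(3) unfolding S_def by auto
    have f: "e1 x z \<le> e1 x y + e1 y z" "e2 x z \<le> e2 x y + e2 y z"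
      "e1 x y \<le> e2 x y" "e1 y z \<le> e2 y z" "e1 x z \<le> e2 x z"
      "e2 x y \<le> e1 x y + \<epsilon>" "e2 y z \<le> e1 y z + \<epsilon>" "e2 x z \<le> e1 x z + \<epsilon>"
      using t1 t2 l1 l2 u v w by auto
    show "g u w \<le> g u v + g v w"
      using u(3) v(3) w(3) f eps unfolding g_def u(1) v(1) w(1) by auto
  qed
  have PC: "P = (C, e1)" unfolding C_def e1_def by simp
  have QC: "Q = (C, e2)" unfolding C_def e2_def using C by (simp add: prod_eq_iff)
  have "dGH (C,e1) (C,e2) \<le> \<epsilon> \<and> dGH (C,e2) (C,e1) \<le> \<epsilon>"
  proof (rule dGH_le2[OF P[unfolded PC] Q[unfolded QC] ms_transport[OF ms], where f="\<lambda>x. enc (0,x)" and g="\<lambda>x. enc (1,x)"])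
    show "isom_emb (C, e1) (enc ` S) (\<lambda>a b. g (dec a) (dec b)) (\<lambda>x. enc (0, x))"
      unfolding isom_emb_def S_def g_def by auto
    show "isom_emb (C, e2) (enc ` S) (\<lambda>a b. g (dec a) (dec b)) (\<lambda>x. enc (1, x))"
      unfolding isom_emb_def S_def g_def by auto
    have "g (0,x) (1,x) = \<epsilon>" if "x \<in> C" for x using z1[OF that that] unfolding g_def by simp
    then show "\<forall>x\<in>fst (C, e1). \<exists>y\<in>fst (C, e2). g (dec (enc (0, x))) (dec (enc (1, y))) \<le> \<epsilon>"
      "\<forall>y\<in>fst (C, e2). \<exists>x\<in>fst (C, e1). g (dec (enc (0, x))) (dec (enc (1, y))) \<le> \<epsilon>"
      by force+
  qed
  then show ?thesis using PC QC by simp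
qed

lemma pd_cmp:
  assumes X: "is_cms X" and Y: "is_cms Y" and a: "0 \<le> a" "a \<le> a'" and b: "0 \<le> b" "b \<le> b'"
    and p: "p \<in> fst X \<times> fst Y" and q: "q \<in> fst X \<times> fst Y"
  shows "pd X Y a b p q \<le> pd X Y a' b' p q \<and>
    pd X Y a' b' p q \<le> pd X Y a b p q + (a' - a) * diam X + (b' - b) * diam Y"
proof -
  have dx: "0 \<le> snd X (fst p) (fst q)" "snd X (fst p) (fst q) \<le> diam X"
    using cms_nonneg[OF X] diam_ge[OF X] p q by (auto simp: mem_Times_iff)
  have dy: "0 \<le> snd Y (snd p) (snd q)" "snd Y (snd p) (snd q) \<le> diam Y"
    using cms_nonneg[OF Y] diam_ge[OF Y] p q by (auto simp: mem_Times_iff)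
  have 1: "a * snd X (fst p) (fst q) \<le> a' * snd X (fst p) (fst q)" using a dx by (simp add: mult_right_mono)
  have 2: "b * snd Y (snd p) (snd q) \<le> b' * snd Y (snd p) (snd q)" using b dy by (simp add: mult_right_mono)
  have 3: "(a' - a) * snd X (fst p) (fst q) \<le> (a' - a) * diam X" using a dx by (simp add: mult_left_mono)
  have 4: "(b' - b) * snd Y (snd p) (snd q) \<le> (b' - b) * diam Y" using b dy by (simp add: mult_left_mono)
  have 5: "0 \<le> (a' - a) * diam X" "0 \<le> (b' - b) * diam Y" using a b diam_nonneg[OF X] diam_nonneg[OF Y] by simp_all
  show ?thesis unfolding pd_def using 1 2 3 4 5 by (auto simp: algebra_simps)
qed

lemma PP_glue:
  assumes X: "is_cms X" and Y: "is_cms Y" and a: "0 < a" "a \<le> a'" and b: "0 < b" "b \<le> b'" and eta: "0 < \<eta>"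
  shows "dGH (PP X Y a b) (PP X Y a' b') \<le> (a' - a) * diam X + (b' - b) * diam Y + \<eta> \<and>
         dGH (PP X Y a' b') (PP X Y a b) \<le> (a' - a) * diam X + (b' - b) * diam Y + \<eta>"
proof (rule glue)
  show "is_cms (PP X Y a b)" by (rule PP_cms) (use X Y a b in auto)
  show "is_cms (PP X Y a' b')" by (rule PP_cms) (use X Y a b in auto)
  show "fst (PP X Y a' b') = fst (PP X Y a b)" by (simp add: PP_def)
  have 5: "0 \<le> (a' - a) * diam X" "0 \<le> (b' - b) * diam Y" using a b diam_nonneg[OF X] diam_nonneg[OF Y] by simp_all
  then show "0 < (a' - a) * diam X + (b' - b) * diam Y + \<eta>" using eta by linarith
  have c: "pd X Y a b p q \<le> pd X Y a' b' p q \<and>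
    pd X Y a' b' p q \<le> pd X Y a b p q + (a' - a) * diam X + (b' - b) * diam Y"
    if "p \<in> fst X \<times> fst Y" "q \<in> fst X \<times> fst Y" for p q
    by (rule pd_cmp[OF X Y _ a(2) _ b(2) that]) (use a b in auto)
  show "\<forall>x\<in>fst (PP X Y a b). \<forall>y\<in>fst (PP X Y a b). snd (PP X Y a b) x y \<le> snd (PP X Y a' b') x y"
    using c by (auto simp: PP_def)
  show "\<forall>x\<in>fst (PP X Y a b). \<forall>y\<in>fst (PP X Y a b). snd (PP X Y a' b') x y \<le> snd (PP X Y a b) x y + ((a' - a) * diam X + (b' - b) * diam Y + \<eta>)"
    using c eta by (fastforce simp: PP_def)
qed



definition alf :: "real \<Rightarrow> real" where "alf t = min 1 (2 - 2 * t)"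
definition bet :: "real \<Rightarrow> real" where "bet t = min 1 (2 * t)"

lemma mid:
  assumes X: "is_cms X" and Y: "is_cms Y" and dX: "diam X = 2 * r" and dY: "diam Y = 2 * r"
    and s: "0 < s" "s < 1" and t: "0 < t" "t < 1"
    and half: "(s \<le> 1/2 \<and> t \<le> 1/2) \<or> (1/2 \<le> s \<and> 1/2 \<le> t)" and eta: "0 < \<eta>"
  shows "dGH (PP X Y (alf s) (bet s)) (PP X Y (alf t) (bet t)) \<le> 4 * \<bar>s-t\<bar> * r + \<eta>"
proof -
  have gen: "dGH (PP X Y (alf u) (bet u)) (PP X Y (alf v) (bet v)) \<le> 4* (v-u) * r + \<eta> \<and>
             dGH (PP X Y (alf v) (bet v)) (PP X Y (alf u) (bet u)) \<le> 4* (v-u) * r + \<eta>"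
    if uv: "u \<le> v" "0 < u" "v < 1" "(u \<le> 1/2 \<and> v \<le> 1/2) \<or> (1/2 \<le> u \<and> 1/2 \<le> v)" for u v
  proof (cases "v \<le> 1/2")
    case True
    have ee: "alf u = 1" "alf v = 1" "bet u = 2 * u" "bet v = 2* v" using uv True by (auto simp: alf_def bet_def)
    have "dGH (PP X Y 1 (2 * u)) (PP X Y 1 (2* v)) \<le> (1 - 1) * diam X + (2* v - 2 * u) * diam Y + \<eta> \<and>
          dGH (PP X Y 1 (2* v)) (PP X Y 1 (2 * u)) \<le> (1 - 1) * diam X + (2* v - 2 * u) * diam Y + \<eta>"
      by (rule PP_glue[OF X Y]) (use uv eta in auto)
    moreover have "(1 - 1) * diam X + (2* v - 2 * u) * diam Y + \<eta> = 4* (v-u) * r + \<eta>" using dY by (simp add: algebra_simps)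
    ultimately show ?thesis using ee by simp
  next
    case False
    then have h: "1/2 \<le> u" using uv by auto
    have ee: "alf u = 2 - 2 * u" "alf v = 2 - 2* v" "bet u = 1" "bet v = 1" using uv h by (auto simp: alf_def bet_def)
    have "dGH (PP X Y (2 - 2* v) 1) (PP X Y (2 - 2 * u) 1) \<le> ((2 - 2 * u) - (2 - 2* v)) * diam X + (1 - 1) * diam Y + \<eta> \<and>
          dGH (PP X Y (2 - 2 * u) 1) (PP X Y (2 - 2* v) 1) \<le> ((2 - 2 * u) - (2 - 2* v)) * diam X + (1 - 1) * diam Y + \<eta>"
      by (rule PP_glue[OF X Y]) (use uv eta in auto)
    moreover have "((2 - 2 * u) - (2 - 2* v)) * diam X + (1 - 1) * diam Y + \<eta> = 4* (v-u) * r + \<eta>" using dX by (simp add: algebra_simps)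
    ultimately show ?thesis using ee by simp
  qed
  show ?thesis
  proof (cases "s \<le> t")
    case True
    then have "\<bar>s - t\<bar> = t - s" by simp
    have "dGH (PP X Y (alf s) (bet s)) (PP X Y (alf t) (bet t)) \<le> 4 * (t-s) * r + \<eta>"
      using gen[of s t] True s t half by auto
    then show ?thesis using \<open>\<bar>s - t\<bar> = t - s\<close> by (simp add: algebra_simps)
  next
    case False
    then have "\<bar>s - t\<bar> = s - t" by simp
    have h': "(t \<le> 1/2 \<and> s \<le> 1/2) \<or> (1/2 \<le> t \<and> 1/2 \<le> s)" using half by auto
    have "dGH (PP X Y (alf s) (bet s)) (PP X Y (alf t) (bet t)) \<le> 4 * (s-t) * r + \<eta>"
      using gen[of t s] False s t h' by auto
    then show ?thesis using \<open>\<bar>s - t\<bar> = s - t\<close> by simp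
  qed
qed

theorem corollary2:
  fixes r :: real
  assumes "r \<ge> 0"
  shows "gh_path_connected {Y. is_cms Y \<and> dGH Delta1 Y = r}"
  unfolding gh_path_connected_def
proof (intro ballI)
  fix Y0 Y1 assume Y0: "Y0 \<in> {Y. is_cms Y \<and> dGH Delta1 Y = r}" and Y1: "Y1 \<in> {Y. is_cms Y \<and> dGH Delta1 Y = r}"
  have X: "is_cms Y0" and Y: "is_cms Y1" using Y0 Y1 by auto
  have dX: "diam Y0 = 2 * r" using Y0 dGH_Delta1[OF X] by auto
  have dY: "diam Y1 = 2 * r" using Y1 dGH_Delta1[OF Y] by auto
  define pth where "pth = (\<lambda>t. if t \<le> 0 then Y0 else if 1 \<le> t then Y1 else PP Y0 Y1 (alf t) (bet t))"
  have gin: "pth t = PP Y0 Y1 (alf t) (bet t)" if "0 < t" "t < 1" for t using that by (simp add: pth_def)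
  have alpos: "0 < alf t" "0 < bet t" if "0 < t" "t < 1" for t using that by (auto simp: alf_def bet_def)
  show "\<exists>pth::real\<Rightarrow>cms. (\<forall>t\<in>{0..1}. pth t \<in> {Y. is_cms Y \<and> dGH Delta1 Y = r}) \<and> pth 0 = Y0 \<and> pth 1 = Y1 \<and>
       (\<forall>t\<in>{0..1}. \<forall>e>0. \<exists>\<delta>>0. \<forall>s\<in>{0..1}. \<bar>s - t\<bar> < \<delta> \<longrightarrow> dGH (pth s) (pth t) < e)"
  proof (rule exI[of _ pth], intro conjI)
    show "pth 0 = Y0" "pth 1 = Y1" by (simp_all add: pth_def)
    show "\<forall>t\<in>{0..1}. pth t \<in> {Y. is_cms Y \<and> dGH Delta1 Y = r}"
    proof
      fix t :: real assume t: "t \<in> {0..1}"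
      show "pth t \<in> {Y. is_cms Y \<and> dGH Delta1 Y = r}"
      proof (cases "0 < t \<and> t < 1")
        case True
        have P: "is_cms (PP Y0 Y1 (alf t) (bet t))" using PP_cms[OF X Y alpos] True by auto
        have "diam (PP Y0 Y1 (alf t) (bet t)) = max (alf t * (2 * r)) (bet t * (2 * r))"
          using diam_PP[OF X Y alpos] True dX dY by auto
        also have "\<dots> = 2 * r"
        proof (cases "t \<le> 1/2")
          case True
          then have "alf t = 1" "bet t \<le> 1" by (auto simp: alf_def bet_def)
          then show ?thesis using assms mult_right_mono[of "bet t" 1 "2 * r"] by auto
        next
          case False
          then have "bet t = 1" "alf t \<le> 1" by (auto simp: alf_def bet_def)
          then show ?thesis using assms mult_right_mono[of "alf t" 1 "2 * r"] by auto
        qed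
        finally have "dGH Delta1 (PP Y0 Y1 (alf t) (bet t)) = r" using dGH_Delta1[OF P] by simp
        then show ?thesis using P gin True by simp
      next
        case False
        then have "t = 0 \<or> t = 1" using t by auto
        then show ?thesis using Y0 Y1 by (auto simp: pth_def)
      qed
    qed
    show "\<forall>t\<in>{0..1}. \<forall>e>0. \<exists>\<delta>>0. \<forall>s\<in>{0..1}. \<bar>s - t\<bar> < \<delta> \<longrightarrow> dGH (pth s) (pth t) < e"
    proof (intro ballI allI impI)
      fix t :: real and e :: real assume t: "t \<in> {0..1}" and e: "0 < e"
      define K where "K = 8 * (r + 1)"
      have K: "0 < K" using assms unfolding K_def by simp
      define \<delta> where "\<delta> = min (e / K) (if t = 0 \<or> t = 1/2 \<or> t = 1 then 1/2 else min (min t (1-t)) \<bar>t - 1/2\<bar>)"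
      have \<delta>pos: "0 < \<delta>" using t e K unfolding \<delta>_def by auto
      show "\<exists>\<delta>>0. \<forall>s\<in>{0..1}. \<bar>s - t\<bar> < \<delta> \<longrightarrow> dGH (pth s) (pth t) < e"
      proof (intro exI conjI ballI impI)
        show "0 < \<delta>" by fact
        fix s :: real assume s: "s \<in> {0..1}" and st: "\<bar>s - t\<bar> < \<delta>"
        have st1: "\<bar>s - t\<bar> < e / K" using st unfolding \<delta>_def by auto
        have key: "4 * \<bar>s - t\<bar> * r < e / 2"
        proof -
          have "4 * \<bar>s - t\<bar> * r \<le> 4 * (e / K) * r" using st1 assms by (intro mult_right_mono) auto
          also have "4 * (e / K) * r < e / 2" using K e unfolding K_def by (simp add: field_simps)
          finally show ?thesis .
        qed
        consider "t = 0" | "t = 1" | "0 < t \<and> t < 1" using t by force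
        then show "dGH (pth s) (pth t) < e"
        proof cases
          case 1
          have s2: "s < 1/2" using st unfolding \<delta>_def 1 by auto
          show ?thesis
          proof (cases "s = 0")
            case True
            then show ?thesis using dGH_self[OF X] e 1 by (simp add: pth_def)
          next
            case False
            then have s0: "0 < s" using s by auto
            have "pth s = PP Y0 Y1 1 (2 * s)" using gin[of s] s0 s2 by (simp add: alf_def bet_def)
            moreover have "dGH (PP Y0 Y1 1 (2 * s)) Y0 \<le> 2 * s * diam Y1" using PP_end1[OF X Y] s0 by simp
            moreover have "pth t = Y0" using 1 by (simp add: pth_def)
            moreover have "2 * s * diam Y1 = 4 * \<bar>s - t\<bar> * r" using dY 1 s0 by simp
            ultimately show ?thesis using key e by simp
          qed
        next
          case 2
          have s2: "1/2 < s" using st s unfolding \<delta>_def 2 by auto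
          show ?thesis
          proof (cases "s = 1")
            case True
            then show ?thesis using dGH_self[OF Y] e 2 by (simp add: pth_def)
          next
            case False
            then have s0: "s < 1" using s by auto
            have "pth s = PP Y0 Y1 (2 - 2 * s) 1" using gin[of s] s0 s2 by (simp add: alf_def bet_def)
            moreover have "dGH (PP Y0 Y1 (2 - 2 * s) 1) Y1 \<le> (2 - 2 * s) * diam Y0" using PP_end2[OF X Y] s0 by simp
            moreover have "pth t = Y1" using 2 by (simp add: pth_def)
            moreover have "(2 - 2 * s) * diam Y0 = 4 * \<bar>s - t\<bar> * r" using dX 2 s0 by (simp add: algebra_simps)
            ultimately show ?thesis using key e by simp
          qed
        next
          case 3
          have sin: "0 < s \<and> s < 1 \<and> ((s \<le> 1/2 \<and> t \<le> 1/2) \<or> (1/2 \<le> s \<and> 1/2 \<le> t))"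
          proof (cases "t = 1/2")
            case True
            then have "\<bar>s - t\<bar> < 1/2" using st unfolding \<delta>_def by auto
            then show ?thesis using True by (auto simp: abs_real_def split: if_splits)
          next
            case False
            then have "\<bar>s - t\<bar> < min (min t (1-t)) \<bar>t - 1/2\<bar>" using st 3 unfolding \<delta>_def by auto
            then show ?thesis using 3 by (auto simp: abs_if split: if_splits)
          qed
          have "dGH (PP Y0 Y1 (alf s) (bet s)) (PP Y0 Y1 (alf t) (bet t)) \<le> 4 * \<bar>s-t\<bar> * r + e/2"
            by (rule mid[OF X Y dX dY]) (use sin 3 e in auto)
          then show ?thesis using gin[of s] gin[of t] sin 3 key by simp
        qed
      qed
    qed
  qed
qed

end
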